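(* For a distributed storage system $\mathcal{D}(n,k,d)$ with node storage capacity $\alpha$ and repair bandwidth $\gamma=d\beta$, in the presence of an adversary that can eavesdrop on any $\ell<k$ nodes and control a subset of $b\le \ell$ of these nodes, the resiliency capacity satisfies \[ C_r(\alpha,\gamma)\le\sum_{i=b+1}^{k}\min\{(d-i+1)\beta,\ \alpha\}. \]
   Context: A distributed storage system (DSS) $\mathcal{D}(n,k,d)$, $k\le d\le n-1$: a source stores a file on $n$ storage nodes, each storing at most $\alpha$ symbols. Nodes fail one at a time; each failed node is replaced by a new node that connects to some $d$ of the remaining $n-1$ active nodes and downloads $\beta=\gamma/d$ symbols from each (symmetric repair), then stores at most $\alpha$ symbols. A data collector connects to any $k$ simultaneously active nodes and must recover the file from their stored contents. A limited-knowledge adversary knows the storage/repair/decoding schemes, chooses (possibly at different times) $\ell$ nodes among all nodes ever in the system on which it eavesdrops (observing everything they download and store), and controls a subset of $b\le\ell$ of them: for a controlled node it may arbitrarily alter the stored data and the messages that node sends during repair and to data collectors. Its knowledge of the file is only what it can infer from its observations. The resiliency capacity $C_r(\alpha,\gamma)$ is the maximum file size that can be stored so that every data collector, for any failure/repair sequence, recovers the file reliably (with probability of decoding error that can be made arbitrarily small) against any such adversary. *)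

theory Defs
  imports "HOL-Probability.Probability" "HOL-Library.Extended_Nat"
begin

text \<open>
Symbols are elements of a finite alphabet Sigma (a set of naturals with at least two
elements).  Storage slots are 0..<n.  Nodes ever in the system are identified by
their creation index: the initial nodes are 0..<n (node i initially in slot i), the
newcomer created by the j-th repair (j counted from 0) is node n+j.
A repair event is a pair (f, H): the node in slot f fails and is replaced by a
newcomer that downloads beta symbols from each of the d helper slots listed in H.
\<close>

type_synonym event = "nat \<times> nat list"
type_synonym obs_log = "(nat \<times> nat list list) list"
type_synonym dss_state = "(nat \<Rightarrow> nat list) \<times> (nat \<Rightarrow> nat) \<times> obs_log"

text \<open>Every call uses fresh
independent randomness.  enc: file to the joint contents of the n initial nodes;
rmsg: (schedule so far, helper slot, helper content) to the message sent;
rstore: (schedule so far, received messages) to the stored content;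
dec: (schedule, collector slots, collected contents) to the file estimate.\<close>
record dss_scheme =
  enc :: "nat list \<Rightarrow> (nat \<Rightarrow> nat list) pmf"
  rmsg :: "event list \<Rightarrow> nat \<Rightarrow> nat list \<Rightarrow> nat list pmf"
  rstore :: "event list \<Rightarrow> nat list list \<Rightarrow> nat list pmf"
  dec :: "event list \<Rightarrow> nat list \<Rightarrow> nat list list \<Rightarrow> nat list pmf"

text \<open>Adversary: eavesdropped nodes eav, controlled nodes ctl; the messages sent by
controlled nodes (in repair step j from helper slot h) and the contents they hand to a
data collector are arbitrary functions of the adversary's observations so far
(the log of everything downloaded and stored by eavesdropped nodes).\<close>
record adversary =
  eav :: "nat set"
  ctl :: "nat set"
  amsg :: "nat \<Rightarrow> nat \<Rightarrow> obs_log \<Rightarrow> nat list"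
  acol :: "nat \<Rightarrow> obs_log \<Rightarrow> nat list"

primrec pmf_seq :: "'a pmf list \<Rightarrow> 'a list pmf" where
  "pmf_seq [] = return_pmf []"
| "pmf_seq (p # ps) = bind_pmf p (\<lambda>x. map_pmf (\<lambda>xs. x # xs) (pmf_seq ps))"

definition init_state :: "dss_scheme \<Rightarrow> adversary \<Rightarrow> nat \<Rightarrow> nat list \<Rightarrow> dss_state pmf" where
  "init_state S A n w =
     map_pmf (\<lambda>c. (c, id, map (\<lambda>i. (i, [c i])) (filter (\<lambda>i. i \<in> eav A) [0..<n]))) (enc S w)"

definition helper_msg ::
  "dss_scheme \<Rightarrow> adversary \<Rightarrow> event list \<Rightarrow> nat \<Rightarrow> dss_state \<Rightarrow> nat \<Rightarrow> nat list pmf" where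
  "helper_msg S A sched j st h = (case st of (c, occ, lg) \<Rightarrow>
     if occ h \<in> ctl A then return_pmf (amsg A j h lg)
     else rmsg S (take (Suc j) sched) h (c (occ h)))"

definition repair_step ::
  "dss_scheme \<Rightarrow> adversary \<Rightarrow> nat \<Rightarrow> event list \<Rightarrow> nat \<Rightarrow> dss_state \<Rightarrow> dss_state pmf" where
  "repair_step S A n sched j st = (case st of (c, occ, lg) \<Rightarrow>
     bind_pmf (pmf_seq (map (helper_msg S A sched j st) (snd (sched ! j)))) (\<lambda>ms.
       map_pmf (\<lambda>s. (c(n + j := s), occ(fst (sched ! j) := n + j),
                      if n + j \<in> eav A then lg @ [(n + j, ms @ [s])] else lg))
         (rstore S (take (Suc j) sched) ms)))"

definition run_dss ::
  "dss_scheme \<Rightarrow> adversary \<Rightarrow> nat \<Rightarrow> event list \<Rightarrow> nat list \<Rightarrow> dss_state pmf" where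
  "run_dss S A n sched w =
     foldl (\<lambda>P j. bind_pmf P (repair_step S A n sched j)) (init_state S A n w) [0..<length sched]"

definition collected :: "adversary \<Rightarrow> nat list \<Rightarrow> dss_state \<Rightarrow> nat list list" where
  "collected A K st = (case st of (c, occ, lg) \<Rightarrow>
     map (\<lambda>h. if occ h \<in> ctl A then acol A h lg else c (occ h)) K)"

definition error_prob ::
  "dss_scheme \<Rightarrow> adversary \<Rightarrow> nat \<Rightarrow> nat set \<Rightarrow> nat \<Rightarrow> event list \<Rightarrow> nat list \<Rightarrow> real" where
  "error_prob S A n \<Sigma> B sched K =
     measure_pmf.prob
       (bind_pmf (pmf_of_set {w. set w \<subseteq> \<Sigma> \<and> length w = B}) (\<lambda>w.
        bind_pmf (run_dss S A n sched w) (\<lambda>st.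
        map_pmf (\<lambda>est. est \<noteq> w) (dec S sched K (collected A K st))))) {True}"

definition valid_scheme :: "nat \<Rightarrow> nat \<Rightarrow> nat \<Rightarrow> nat set \<Rightarrow> dss_scheme \<Rightarrow> bool" where
  "valid_scheme n \<alpha> \<beta> \<Sigma> S \<longleftrightarrow>
     (\<forall>w. \<forall>c \<in> set_pmf (enc S w). \<forall>i<n. set (c i) \<subseteq> \<Sigma> \<and> length (c i) = \<alpha>) \<and>
     (\<forall>pre h x. \<forall>m \<in> set_pmf (rmsg S pre h x). set m \<subseteq> \<Sigma> \<and> length m = \<beta>) \<and>
     (\<forall>pre ms. \<forall>s \<in> set_pmf (rstore S pre ms). set s \<subseteq> \<Sigma> \<and> length s = \<alpha>)"

definition valid_schedule :: "nat \<Rightarrow> nat \<Rightarrow> event list \<Rightarrow> bool" where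
  "valid_schedule n d sched \<longleftrightarrow>
     (\<forall>(f, H) \<in> set sched. f < n \<and> distinct H \<and> length H = d \<and> set H \<subseteq> {0..<n} - {f})"

definition valid_collector :: "nat \<Rightarrow> nat \<Rightarrow> nat list \<Rightarrow> bool" where
  "valid_collector n k K \<longleftrightarrow> distinct K \<and> length K = k \<and> set K \<subseteq> {0..<n}"

definition valid_adversary ::
  "nat \<Rightarrow> nat \<Rightarrow> nat \<Rightarrow> nat \<Rightarrow> nat set \<Rightarrow> adversary \<Rightarrow> bool" where
  "valid_adversary l b \<alpha> \<beta> \<Sigma> A \<longleftrightarrow>
     finite (eav A) \<and> card (eav A) \<le> l \<and> ctl A \<subseteq> eav A \<and> card (ctl A) \<le> b \<and>
     (\<forall>j h lg. set (amsg A j h lg) \<subseteq> \<Sigma> \<and> length (amsg A j h lg) = \<beta>) \<and>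
     (\<forall>h lg. set (acol A h lg) \<subseteq> \<Sigma> \<and> length (acol A h lg) = \<alpha>)"

definition resilient_achievable ::
  "nat \<Rightarrow> nat \<Rightarrow> nat \<Rightarrow> nat \<Rightarrow> nat \<Rightarrow> nat \<Rightarrow> nat \<Rightarrow> nat \<Rightarrow> bool" where
  "resilient_achievable n k d l b \<alpha> \<beta> B \<longleftrightarrow>
     (\<forall>\<epsilon>>0. \<exists>\<Sigma> S. finite \<Sigma> \<and> 2 \<le> card \<Sigma> \<and> valid_scheme n \<alpha> \<beta> \<Sigma> S \<and>
        (\<forall>sched K A. valid_schedule n d sched \<longrightarrow> valid_collector n k K \<longrightarrow>
            valid_adversary l b \<alpha> \<beta> \<Sigma> A \<longrightarrow> error_prob S A n \<Sigma> B sched K \<le> \<epsilon>))"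

definition resiliency_capacity ::
  "nat \<Rightarrow> nat \<Rightarrow> nat \<Rightarrow> nat \<Rightarrow> nat \<Rightarrow> nat \<Rightarrow> nat \<Rightarrow> enat" where
  "resiliency_capacity n k d l b \<alpha> \<beta> = Sup (enat ` {B. resilient_achievable n k d l b \<alpha> \<beta> B})"

end

theory Submission
  imports Defs
begin

lemma count_bound:
  fixes P :: "'w \<Rightarrow> 't pmf" and G :: "'t \<Rightarrow> 'w pmf"
  assumes N: "finite N" and T: "finite T" and sup: "\<And>w. w \<in> N \<Longrightarrow> set_pmf (P w) \<subseteq> T"
  shows "(\<Sum>w\<in>N. pmf (bind_pmf (P w) G) w) \<le> real (card T)"
proof -
  have "(\<Sum>w\<in>N. pmf (bind_pmf (P w) G) w) \<le> (\<Sum>w\<in>N. \<Sum>t\<in>T. pmf (G t) w)"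
  proof (rule sum_mono)
    fix w assume w: "w \<in> N"
    have "pmf (bind_pmf (P w) G) w = (\<integral>t. pmf (G t) w \<partial>measure_pmf (P w))" by (rule pmf_bind)
    also have "\<dots> = (\<Sum>t\<in>T. pmf (P w) t *\<^sub>R pmf (G t) w)"
      using sup[OF w] by (intro integral_measure_pmf[OF T]) auto
    also have "\<dots> \<le> (\<Sum>t\<in>T. pmf (G t) w)"
      by (intro sum_mono) (simp add: mult_left_le_one_le pmf_le_1)
    finally show "pmf (bind_pmf (P w) G) w \<le> (\<Sum>t\<in>T. pmf (G t) w)" .
  qed
  also have "\<dots> = (\<Sum>t\<in>T. \<Sum>w\<in>N. pmf (G t) w)" by (rule sum.swap)
  also have "\<dots> \<le> (\<Sum>t\<in>T. 1)"
  proof (rule sum_mono)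
    fix t
    have "(\<Sum>w\<in>N. pmf (G t) w) = measure_pmf.prob (G t) N"
      using N by (simp add: measure_measure_pmf_finite)
    also have "\<dots> \<le> 1" by simp
    finally show "(\<Sum>w\<in>N. pmf (G t) w) \<le> 1" .
  qed
  finally show ?thesis by simp
qed

lemma err_lower:
  fixes P :: "'w \<Rightarrow> 't pmf" and Q :: "'t \<Rightarrow> 'v pmf" and dec :: "'v \<Rightarrow> 'w pmf"
  assumes N: "finite N" "N \<noteq> {}" and T: "finite T"
    and sup: "\<And>w. w \<in> N \<Longrightarrow> set_pmf (P w) \<subseteq> T"
    and D: "\<And>w. w \<in> N \<Longrightarrow> D w = bind_pmf (P w) Q"
  shows "measure_pmf.prob (bind_pmf (pmf_of_set N) (\<lambda>w. bind_pmf (D w) (\<lambda>v. map_pmf (\<lambda>e. e \<noteq> w) (dec v)))) {True}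
     \<ge> 1 - real (card T) / real (card N)"
proof -
  define g where "g = (\<lambda>w. bind_pmf (D w) (\<lambda>v. map_pmf (\<lambda>e. e \<noteq> w) (dec v)))"
  have F: "pmf (g w) False = pmf (bind_pmf (P w) (\<lambda>t. bind_pmf (Q t) dec)) w" if w: "w \<in> N" for w
  proof -
    have "g w = map_pmf (\<lambda>e. e \<noteq> w) (bind_pmf (P w) (\<lambda>t. bind_pmf (Q t) dec))"
      by (simp add: g_def D[OF w] map_bind_pmf bind_assoc_pmf)
    moreover have "(\<lambda>e. e \<noteq> w) -` {False} = {w}" by auto
    ultimately show ?thesis by (simp add: pmf_map measure_pmf_single)
  qed
  have TF: "pmf (g w) True = 1 - pmf (g w) False" for w
  proof -
    have "sum (pmf (g w)) {True, False} = 1" by (rule sum_pmf_eq_1) auto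
    then show ?thesis by simp
  qed
  have cN: "card N > 0" using N by (simp add: card_gt_0_iff)
  have "measure_pmf.prob (bind_pmf (pmf_of_set N) g) {True} = pmf (bind_pmf (pmf_of_set N) g) True"
    by (simp add: measure_pmf_single)
  also have "\<dots> = (\<Sum>w\<in>N. pmf (g w) True) / card N"
    using N by (simp add: pmf_bind integral_pmf_of_set)
  also have "(\<Sum>w\<in>N. pmf (g w) True) = card N - (\<Sum>w\<in>N. pmf (bind_pmf (P w) (\<lambda>t. bind_pmf (Q t) dec)) w)"
    by (simp add: TF F sum_subtractf)
  finally have e: "measure_pmf.prob (bind_pmf (pmf_of_set N) g) {True} =
     (card N - (\<Sum>w\<in>N. pmf (bind_pmf (P w) (\<lambda>t. bind_pmf (Q t) dec)) w)) / card N" .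
  have "(\<Sum>w\<in>N. pmf (bind_pmf (P w) (\<lambda>t. bind_pmf (Q t) dec)) w) \<le> card T"
    by (rule count_bound[OF N(1) T sup])
  then have "(real (card N) - real (card T)) / card N \<le> measure_pmf.prob (bind_pmf (pmf_of_set N) g) {True}"
    unfolding e using cN by (intro divide_right_mono) auto
  also have "(real (card N) - real (card T)) / card N = 1 - real (card T) / real (card N)"
    using cN by (simp add: diff_divide_distrib)
  finally show ?thesis by (simp add: g_def)
qed

lemma card_dep_lists:
  assumes fin: "\<And>j. finite (F j)"
  shows "finite {om. length om = m \<and> (\<forall>j<m. om!j \<in> F j)} \<and>
         card {om. length om = m \<and> (\<forall>j<m. om!j \<in> F j)} = (\<Prod>j<m. card (F j))"
proof (induction m)
  case 0
  have "{om. length om = 0 \<and> (\<forall>j<0. om!j \<in> F j)} = {[]}" by auto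
  then show ?case by simp
next
  case (Suc m)
  define A where "A = {om. length om = m \<and> (\<forall>j<m. om!j \<in> F j)}"
  have eq: "{om. length om = Suc m \<and> (\<forall>j<Suc m. om!j \<in> F j)} = (\<lambda>(om,x). om@[x]) ` (A \<times> F m)"
  proof (rule set_eqI, rule iffI)
    fix om assume "om \<in> {om. length om = Suc m \<and> (\<forall>j<Suc m. om!j \<in> F j)}"
    then have l: "length om = Suc m" and e: "\<forall>j<Suc m. om!j \<in> F j" by auto
    from l obtain ys y where om: "om = ys @ [y]" by (metis length_Suc_conv_rev)
    with l have ly: "length ys = m" by simp
    have "\<forall>j<m. ys!j \<in> F j"
    proof (intro allI impI)
      fix j assume j: "j < m"
      then have "om!j \<in> F j" using e by simp
      moreover have "om!j = ys!j" using om ly j by (simp add: nth_append)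
      ultimately show "ys!j \<in> F j" by simp
    qed
    then have "ys \<in> A" unfolding A_def using ly by auto
    moreover have "y \<in> F m" using e om ly by (metis lessI nth_append_length)
    ultimately show "om \<in> (\<lambda>(om,x). om@[x]) ` (A \<times> F m)" using om by auto
  next
    fix om assume "om \<in> (\<lambda>(om,x). om@[x]) ` (A \<times> F m)"
    then show "om \<in> {om. length om = Suc m \<and> (\<forall>j<Suc m. om!j \<in> F j)}"
      unfolding A_def by (auto simp: nth_append less_Suc_eq)
  qed
  have inj: "inj_on (\<lambda>(om,x). om@[x]) (A \<times> F m)" by (auto simp: inj_on_def)
  have fA: "finite A" "card A = (\<Prod>j<m. card (F j))" using Suc by (auto simp: A_def)
  show ?case unfolding eq using fA fin[of m] inj
    by (simp add: card_image card_cartesian_product)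
qed

lemma arith_split:
  fixes b i0 k d \<alpha> \<beta> :: nat
  assumes "b \<le> i0" "i0 \<le> k" "k \<le> d"
    and lo: "\<And>i. b \<le> i \<Longrightarrow> i < i0 \<Longrightarrow> \<alpha> \<le> (d-i)*\<beta>"
    and hi: "\<And>i. i0 \<le> i \<Longrightarrow> i < k \<Longrightarrow> (d-i)*\<beta> \<le> \<alpha>"
  shows "(\<Sum>i = b+1..k. min ((d-i+1)*\<beta>) \<alpha>) = \<alpha>*(i0-b) + (\<Sum>j<k-i0. \<beta>*(d-(i0+j)))"
proof -
  have "(\<Sum>i = b+1..k. min ((d-i+1)*\<beta>) \<alpha>) = (\<Sum>i = b+1..<k+1. min ((d-i+1)*\<beta>) \<alpha>)"
    by (simp add: atLeastLessThanSuc_atLeastAtMost)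
  also have "\<dots> = (\<Sum>i = b..<k. min ((d-(i+1)+1)*\<beta>) \<alpha>)" by (rule sum.shift_bounds_nat_ivl)
  also have "\<dots> = (\<Sum>i = b..<k. min ((d-i)*\<beta>) \<alpha>)"
    using assms(3) by (intro sum.cong refl) (simp add: Suc_diff_Suc)
  also have "\<dots> = (\<Sum>i = b..<i0. min ((d-i)*\<beta>) \<alpha>) + (\<Sum>i = i0..<k. min ((d-i)*\<beta>) \<alpha>)"
    using assms(1,2) by (simp add: sum.atLeastLessThan_concat)
  also have "(\<Sum>i = b..<i0. min ((d-i)*\<beta>) \<alpha>) = (\<Sum>i = b..<i0. \<alpha>)"
    by (intro sum.cong refl) (auto intro: min.absorb2 lo)
  also have "(\<Sum>i = i0..<k. min ((d-i)*\<beta>) \<alpha>) = (\<Sum>i = i0..<k. \<beta>*(d-i))"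
    using hi by (intro sum.cong refl) (simp add: min_def mult.commute)
  also have "\<dots> = (\<Sum>j = 0..<k-i0. \<beta>*(d-(i0+j)))"
    by (subst sum.atLeastLessThan_shift_0) (simp add: o_def)
  finally show ?thesis by (simp add: atLeast0LessThan mult.commute)
qed

lemma pmf_seq_append:
  "pmf_seq (xs @ ys) = bind_pmf (pmf_seq xs) (\<lambda>a. map_pmf (\<lambda>b. a @ b) (pmf_seq ys))"
proof (induction xs)
  case Nil
  have "map_pmf ((@) []) (pmf_seq ys) = pmf_seq ys" by (rule pmf.map_ident_strong) simp
  then show ?case by (simp add: bind_return_pmf)
next
  case (Cons p xs)
  have e: "\<And>x a. ((@) (x # a)) = (\<lambda>b. x # a @ b)" by auto
  show ?case using Cons by (simp add: map_bind_pmf bind_map_pmf bind_assoc_pmf pmf.map_comp o_def e)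
qed

lemma set_pmf_seq:
  "xs \<in> set_pmf (pmf_seq ps) \<Longrightarrow> length xs = length ps \<and> (\<forall>i<length ps. xs!i \<in> set_pmf (ps!i))"
proof (induction ps arbitrary: xs)
  case Nil then show ?case by simp
next
  case (Cons p ps)
  then obtain x xs' where "x \<in> set_pmf p" "xs' \<in> set_pmf (pmf_seq ps)" "xs = x # xs'" by auto
  with Cons.IH show ?case by (auto simp: nth_Cons split: nat.splits)
qed

lemma foldl_bind:
  "foldl (\<lambda>P j. bind_pmf P (f j)) (bind_pmf P0 g) xs = bind_pmf P0 (\<lambda>s. foldl (\<lambda>P j. bind_pmf P (f j)) (g s) xs)"
  by (induction xs arbitrary: g) (simp_all add: bind_assoc_pmf)

locale cutproc =
  fixes S :: dss_scheme and \<sigma>0 n b i0 d m \<alpha> \<beta> :: nat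
  assumes b_i0: "b \<le> i0" and i0md: "i0 + m \<le> d" and dn: "d < n"
begin

definition A0 :: adversary where
  "A0 = \<lparr>eav = {0..<b}, ctl = {0..<b}, amsg = (\<lambda>j h lg. replicate \<beta> \<sigma>0),
          acol = (\<lambda>h lg. replicate \<alpha> \<sigma>0)\<rparr>"

definition sched :: "event list" where
  "sched = map (\<lambda>j. (i0+j, [0..<i0+j] @ [Suc (i0+j)..<Suc d])) [0..<m]"

definition pre :: "nat \<Rightarrow> event list" where "pre j = take (Suc j) sched"

definition orig :: "nat \<Rightarrow> (nat \<Rightarrow> nat list) \<Rightarrow> nat list list pmf" where
  "orig j c = pmf_seq (map (\<lambda>h. rmsg S (pre j) h (c h)) [Suc (i0+j)..<Suc d])"

definition OMs :: "nat \<Rightarrow> (nat \<Rightarrow> nat list) \<Rightarrow> nat list list list pmf" where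
  "OMs j c = pmf_seq (map (\<lambda>i. orig i c) [0..<j])"

definition nmsg :: "nat \<Rightarrow> nat list list \<Rightarrow> nat list list \<Rightarrow> nat \<Rightarrow> nat list pmf" where
  "nmsg j u ys h = (if h < b then return_pmf (replicate \<beta> \<sigma>0)
     else if h < i0 then rmsg S (pre j) h (u!(h-b)) else rmsg S (pre j) h (ys!(h-i0)))"

primrec Znew :: "nat \<Rightarrow> nat list list \<Rightarrow> nat list list list \<Rightarrow> nat list list pmf" where
  "Znew 0 u om = return_pmf []"
| "Znew (Suc j) u om = bind_pmf (Znew j u om) (\<lambda>ys.
     bind_pmf (pmf_seq (map (nmsg j u ys) [0..<i0+j])) (\<lambda>ms1.
       map_pmf (\<lambda>s. ys @ [s]) (rstore S (pre j) (ms1 @ om!j))))"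

definition mkst :: "(nat \<Rightarrow> nat list) \<Rightarrow> obs_log \<Rightarrow> nat list list \<Rightarrow> dss_state" where
  "mkst c lg ys = ((\<lambda>x. if n \<le> x \<and> x < n + length ys then ys!(x-n) else c x),
     (\<lambda>s. if i0 \<le> s \<and> s < i0 + length ys then n + (s-i0) else s), lg)"

definition RS :: "nat \<Rightarrow> (nat \<Rightarrow> nat list) \<Rightarrow> obs_log \<Rightarrow> dss_state pmf" where
  "RS j c lg = foldl (\<lambda>P j. bind_pmf P (repair_step S A0 n sched j)) (return_pmf (c, id, lg)) [0..<j]"

lemma Znew_len: "ys \<in> set_pmf (Znew j u om) \<Longrightarrow> length ys = j"
  by (induction j arbitrary: ys) auto

lemma Znew_cong: "(\<forall>i<j. om!i = om'!i) \<Longrightarrow> Znew j u om = Znew j u om'"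
  by (induction j) auto

lemma OMs_len: "om \<in> set_pmf (OMs j c) \<Longrightarrow> length om = j"
  using set_pmf_seq unfolding OMs_def by fastforce

lemma sched_nth: "j < m \<Longrightarrow> sched ! j = (i0+j, [0..<i0+j] @ [Suc (i0+j)..<Suc d])"
  unfolding sched_def by simp

lemma step_eq:
  assumes j: "j < m" and ys: "length ys = j"
  shows "repair_step S A0 n sched j (mkst c lg ys) =
    bind_pmf (pmf_seq (map (nmsg j (map c [b..<i0]) ys) [0..<i0+j])) (\<lambda>ms1.
      bind_pmf (orig j c) (\<lambda>x. map_pmf (\<lambda>s. mkst c lg (ys @ [s])) (rstore S (pre j) (ms1 @ x))))"
proof -
  define u where "u = map c [b..<i0]"
  define C' where "C' = (\<lambda>x. if n \<le> x \<and> x < n + length ys then ys!(x-n) else c x)"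
  define O' where "O' = (\<lambda>s. if i0 \<le> s \<and> s < i0 + length ys then n + (s-i0) else s)"
  define st where "st = (C', O', lg)"
  have stm: "mkst c lg ys = st" by (simp add: st_def C'_def O'_def mkst_def)
  have h1: "map (helper_msg S A0 sched j st) [0..<i0+j] = map (nmsg j u ys) [0..<i0+j]"
  proof (rule map_cong[OF refl])
    fix h assume "h \<in> set [0..<i0+j]"
    then have h: "h < i0 + j" by simp
    show "helper_msg S A0 sched j st h = nmsg j u ys h"
      using h ys b_i0 i0md dn j
      by (auto simp: helper_msg_def st_def C'_def O'_def nmsg_def A0_def pre_def u_def)
  qed
  have h2: "map (helper_msg S A0 sched j st) [Suc (i0+j)..<Suc d] =
            map (\<lambda>h. rmsg S (pre j) h (c h)) [Suc (i0+j)..<Suc d]"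
  proof (rule map_cong[OF refl])
    fix h assume "h \<in> set [Suc (i0+j)..<Suc d]"
    then have h: "i0 + j < h" "h \<le> d" by auto
    show "helper_msg S A0 sched j st h = rmsg S (pre j) h (c h)"
      using h ys b_i0 i0md dn j
      by (auto simp: helper_msg_def st_def C'_def O'_def A0_def pre_def)
  qed
  have ns: "\<And>s. (C'(n + j := s), O'(i0 + j := n + j), lg) = mkst c lg (ys @ [s])"
    using ys by (auto simp: C'_def O'_def mkst_def fun_eq_iff nth_append)
  have nA: "n + j \<notin> eav A0" using b_i0 i0md dn by (simp add: A0_def)
  have r: "repair_step S A0 n sched j st = bind_pmf (pmf_seq (map (helper_msg S A0 sched j st)
       ([0..<i0+j] @ [Suc (i0+j)..<Suc d]))) (\<lambda>ms. map_pmf (\<lambda>s. (C'(n+j:=s), O'(i0+j := n+j), lg))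
       (rstore S (pre j) ms))"
    unfolding repair_step_def using nA
    by (simp add: st_def sched_nth[OF j] pre_def del: upt_Suc)
  show ?thesis
    unfolding stm r u_def[symmetric] map_append pmf_seq_append h1 h2 orig_def[symmetric] ns
    by (simp add: bind_map_pmf bind_assoc_pmf del: upt_Suc)
qed


lemma OMs_Suc: "OMs (Suc j) c = bind_pmf (OMs j c) (\<lambda>om. map_pmf (\<lambda>x. om @ [x]) (orig j c))"
proof -
  have "pmf_seq [orig j c] = map_pmf (\<lambda>x. [x]) (orig j c)"
    by (simp add: map_pmf_def bind_return_pmf)
  then show ?thesis by (simp add: OMs_def pmf_seq_append map_pmf_comp)
qed

lemma RS_eq: "j \<le> m \<Longrightarrow> RS j c lg =
   bind_pmf (OMs j c) (\<lambda>om. map_pmf (mkst c lg) (Znew j (map c [b..<i0]) om))"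
proof (induction j)
  case 0
  have "mkst c lg [] = (c, id, lg)" by (auto simp: mkst_def fun_eq_iff)
  then show ?case by (simp add: RS_def OMs_def bind_return_pmf)
next
  case (Suc j)
  then have j: "j < m" by simp
  define u where "u = map c [b..<i0]"
  define M1 where "M1 = (\<lambda>ys. pmf_seq (map (nmsg j u ys) [0..<i0+j]))"
  have "RS (Suc j) c lg = bind_pmf (RS j c lg) (repair_step S A0 n sched j)"
    by (simp add: RS_def)
  also have "\<dots> = bind_pmf (OMs j c) (\<lambda>om. bind_pmf (Znew j u om) (\<lambda>ys. repair_step S A0 n sched j (mkst c lg ys)))"
    using Suc j by (simp add: u_def bind_map_pmf bind_assoc_pmf)
  also have "\<dots> = bind_pmf (OMs j c) (\<lambda>om. bind_pmf (Znew j u om) (\<lambda>ys. bind_pmf (M1 ys) (\<lambda>ms1.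
      bind_pmf (orig j c) (\<lambda>x. map_pmf (\<lambda>s. mkst c lg (ys @ [s])) (rstore S (pre j) (ms1 @ x))))))"
    by (intro bind_pmf_cong refl) (simp add: step_eq[OF j] Znew_len M1_def u_def)
  also have "\<dots> = bind_pmf (OMs j c) (\<lambda>om. bind_pmf (orig j c) (\<lambda>x. bind_pmf (Znew j u om) (\<lambda>ys. bind_pmf (M1 ys) (\<lambda>ms1.
      map_pmf (\<lambda>s. mkst c lg (ys @ [s])) (rstore S (pre j) (ms1 @ x))))))"
    by (simp add: bind_commute_pmf[of "orig j c"])
  also have "\<dots> = bind_pmf (OMs j c) (\<lambda>om. bind_pmf (orig j c) (\<lambda>x. map_pmf (mkst c lg) (Znew (Suc j) u (om @ [x]))))"
  proof (intro bind_pmf_cong refl)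
    fix om x assume om: "om \<in> set_pmf (OMs j c)"
    then have l: "length om = j" by (rule OMs_len)
    have "Znew j u (om @ [x]) = Znew j u om" by (rule Znew_cong) (simp add: l nth_append)
    moreover have "(om @ [x]) ! j = x" using l nth_append_length by metis
    ultimately show "bind_pmf (Znew j u om) (\<lambda>ys. bind_pmf (M1 ys) (\<lambda>ms1.
      map_pmf (\<lambda>s. mkst c lg (ys @ [s])) (rstore S (pre j) (ms1 @ x)))) =
      map_pmf (mkst c lg) (Znew (Suc j) u (om @ [x]))"
      by (simp add: M1_def l map_bind_pmf pmf.map_comp o_def)
  qed
  also have "\<dots> = bind_pmf (OMs (Suc j) c) (\<lambda>om. map_pmf (mkst c lg) (Znew (Suc j) u om))"
    by (simp add: OMs_Suc bind_map_pmf bind_assoc_pmf)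
  finally show ?case by (simp add: u_def)
qed

end


context cutproc
begin

definition V :: "nat list list \<Rightarrow> nat list list \<Rightarrow> nat list list" where
  "V u ys = map (\<lambda>h. if h < b then replicate \<alpha> \<sigma>0 else if h < i0 then u!(h-b) else ys!(h-i0)) [0..<i0+m]"

lemma collected_mkst: assumes ys: "length ys = m" shows
   "collected A0 [0..<i0+m] (mkst c lg ys) = V (map c [b..<i0]) ys"
  unfolding collected_def mkst_def V_def prod.case
  by (rule map_cong[OF refl]) (use b_i0 i0md dn ys in \<open>auto simp: A0_def\<close>)

lemma view_eq: "map_pmf (collected A0 [0..<i0+m]) (run_dss S A0 n sched w) =
   bind_pmf (enc S w) (\<lambda>c. bind_pmf (OMs m c) (\<lambda>om. map_pmf (V (map c [b..<i0])) (Znew m (map c [b..<i0]) om)))"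
proof -
  have len: "length sched = m" by (simp add: sched_def)
  define L where "L = (\<lambda>c::nat \<Rightarrow> nat list. map (\<lambda>i. (i, [c i])) (filter (\<lambda>i. i \<in> eav A0) [0..<n]))"
  have init: "init_state S A0 n w = bind_pmf (enc S w) (\<lambda>c. return_pmf (c, id, L c))"
    by (simp add: init_state_def map_pmf_def L_def)
  have run: "run_dss S A0 n sched w = bind_pmf (enc S w) (\<lambda>c. RS m c (L c))"
    unfolding run_dss_def init len foldl_bind RS_def ..
  show ?thesis
    unfolding run RS_eq[OF order.refl] map_bind_pmf pmf.map_comp
    by (intro bind_pmf_cong refl) (simp add: o_def collected_mkst Znew_len cong: pmf.map_cong)
qed

lemma OMs_support:
  assumes vs: "valid_scheme n \<alpha> \<beta> \<Sigma> S" and om: "om \<in> set_pmf (OMs m c)"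
  shows "om \<in> {om. length om = m \<and> (\<forall>j<m. om!j \<in>
     {y. set y \<subseteq> {x. set x \<subseteq> \<Sigma> \<and> length x = \<beta>} \<and> length y = d - (i0+j)})}"
proof -
  from set_pmf_seq[OF om[unfolded OMs_def]]
  have l: "length om = m" and e: "\<forall>j<m. om!j \<in> set_pmf (orig j c)" by auto
  have "om!j \<in> {y. set y \<subseteq> {x. set x \<subseteq> \<Sigma> \<and> length x = \<beta>} \<and> length y = d - (i0+j)}" if j: "j < m" for j
  proof -
    from set_pmf_seq[OF e[rule_format, OF j, unfolded orig_def]]
    have l2: "length (om!j) = d - (i0+j)"
      and e2: "\<forall>i<length (om!j). \<exists>h. (om!j)!i \<in> set_pmf (rmsg S (pre j) h (c h))"
      by (auto simp del: upt_Suc)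
    have "set (om!j) \<subseteq> {x. set x \<subseteq> \<Sigma> \<and> length x = \<beta>}"
    proof
      fix x assume "x \<in> set (om!j)"
      then obtain i where i: "i < length (om!j)" "x = (om!j)!i" by (auto simp: in_set_conv_nth)
      then show "x \<in> {x. set x \<subseteq> \<Sigma> \<and> length x = \<beta>}"
        using e2 vs unfolding valid_scheme_def by blast
    qed
    with l2 show ?thesis by simp
  qed
  with l show ?thesis by simp
qed

end


theorem theorem5:
  fixes n k d l b \<alpha> \<beta> :: nat
  assumes "k \<le> d" and "d \<le> n - 1" and "l < k" and "b \<le> l"
  shows "resiliency_capacity n k d l b \<alpha> \<beta>
           \<le> enat (\<Sum>i = b + 1..k. min ((d - i + 1) * \<beta>) \<alpha>)"
proof -
  define P where "P = (\<lambda>i. b \<le> i \<and> (i = k \<or> (d - i) * \<beta> \<le> \<alpha>))"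
  have Pk: "P k" using assms by (simp add: P_def)
  define i0 where "i0 = (LEAST i. P i)"
  have Pi0: "P i0" unfolding i0_def using Pk by (rule LeastI)
  have i0k: "i0 \<le> k" unfolding i0_def using Pk by (rule Least_le)
  have bi0: "b \<le> i0" using Pi0 by (simp add: P_def)
  have lo: "\<alpha> \<le> (d-i)*\<beta>" if "b \<le> i" "i < i0" for i
  proof -
    have "\<not> P i" using not_less_Least[of i P] that by (simp add: i0_def)
    then show ?thesis using that by (simp add: P_def)
  qed
  have hi: "(d-i)*\<beta> \<le> \<alpha>" if "i0 \<le> i" "i < k" for i
  proof -
    have "(d - i0) * \<beta> \<le> \<alpha>" using Pi0 that by (auto simp: P_def)
    moreover have "(d-i)*\<beta> \<le> (d-i0)*\<beta>" using that by (intro mult_le_mono1) simp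
    ultimately show ?thesis by linarith
  qed
  define m where "m = k - i0"
  define C where "C = \<alpha>*(i0-b) + (\<Sum>j<m. \<beta>*(d-(i0+j)))"
  have sumC: "(\<Sum>i = b+1..k. min ((d-i+1)*\<beta>) \<alpha>) = C"
    using arith_split[OF bi0 i0k \<open>k \<le> d\<close> lo hi] by (simp add: C_def m_def)
  have km: "k = i0 + m" using i0k by (simp add: m_def)
  have dn: "d < n" using assms by linarith
  have key: "B \<le> C" if ra: "resilient_achievable n k d l b \<alpha> \<beta> B" for B
  proof (rule ccontr)
    assume BC: "\<not> B \<le> C"
    have "\<exists>\<Sigma> S. finite \<Sigma> \<and> 2 \<le> card \<Sigma> \<and> valid_scheme n \<alpha> \<beta> \<Sigma> S \<and>
        (\<forall>sched K A. valid_schedule n d sched \<longrightarrow> valid_collector n k K \<longrightarrow>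
            valid_adversary l b \<alpha> \<beta> \<Sigma> A \<longrightarrow> error_prob S A n \<Sigma> B sched K \<le> 1/4)"
      using ra unfolding resilient_achievable_def by (metis zero_less_divide_1_iff zero_less_numeral)
    then obtain \<Sigma> S where fin: "finite \<Sigma>" and c2: "2 \<le> card \<Sigma>" and vs: "valid_scheme n \<alpha> \<beta> \<Sigma> S"
      and all: "\<And>sched K A. valid_schedule n d sched \<Longrightarrow> valid_collector n k K \<Longrightarrow>
            valid_adversary l b \<alpha> \<beta> \<Sigma> A \<Longrightarrow> error_prob S A n \<Sigma> B sched K \<le> 1/4"
      by blast
    have "\<Sigma> \<noteq> {}" using c2 by auto
    then obtain \<sigma>0 where \<sigma>0: "\<sigma>0 \<in> \<Sigma>" by blast
    interpret cp: cutproc S \<sigma>0 n b i0 d m \<alpha> \<beta>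
      by unfold_locales (use bi0 km assms dn in auto)
    have vsch: "valid_schedule n d cp.sched"
      unfolding valid_schedule_def cp.sched_def using km assms dn by auto
    have vcol: "valid_collector n k [0..<i0+m]"
      unfolding valid_collector_def using km assms dn by auto
    have vadv: "valid_adversary l b \<alpha> \<beta> \<Sigma> cp.A0"
      unfolding valid_adversary_def cp.A0_def using assms \<sigma>0 by auto
    have err: "error_prob S cp.A0 n \<Sigma> B cp.sched [0..<i0+m] \<le> 1/4"
      by (rule all[OF vsch vcol vadv])
    define N where "N = {w. set w \<subseteq> \<Sigma> \<and> length w = B}"
    define LA where "LA = {x. set x \<subseteq> \<Sigma> \<and> length x = \<alpha>}"
    define LB where "LB = {x. set x \<subseteq> \<Sigma> \<and> length x = \<beta>}"
    define F where "F = (\<lambda>j. {y. set y \<subseteq> LB \<and> length y = d - (i0+j)})"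
    define OMset where "OMset = {om. length om = m \<and> (\<forall>j<m. om!j \<in> F j)}"
    define U where "U = {u. set u \<subseteq> LA \<and> length u = i0 - b}"
    define T where "T = U \<times> OMset"
    define Pw where "Pw = (\<lambda>w. bind_pmf (enc S w) (\<lambda>c. map_pmf (\<lambda>om. (map c [b..<i0], om)) (cp.OMs m c)))"
    define Q where "Q = (\<lambda>(u, om). map_pmf (cp.V u) (cp.Znew m u om))"
    have Dw: "map_pmf (collected cp.A0 [0..<i0+m]) (run_dss S cp.A0 n cp.sched w) = bind_pmf (Pw w) Q" for w
      by (simp add: cp.view_eq Pw_def Q_def bind_map_pmf bind_assoc_pmf)
    have sup: "set_pmf (Pw w) \<subseteq> T" for w
    proof
      fix t assume "t \<in> set_pmf (Pw w)"
      then obtain c om where c: "c \<in> set_pmf (enc S w)" and om: "om \<in> set_pmf (cp.OMs m c)"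
        and t: "t = (map c [b..<i0], om)" by (auto simp: Pw_def)
      have cc: "\<forall>h<n. set (c h) \<subseteq> \<Sigma> \<and> length (c h) = \<alpha>"
        using vs c unfolding valid_scheme_def by blast
      have "i0 < n" using km assms dn by linarith
      then have "map c [b..<i0] \<in> U"
        using cc unfolding U_def LA_def by (auto, meson less_trans subsetD)
      moreover have "om \<in> OMset" using cp.OMs_support[OF vs om] by (simp add: OMset_def F_def LB_def)
      ultimately show "t \<in> T" by (simp add: t T_def)
    qed
    have finLA: "finite LA" "card LA = card \<Sigma> ^ \<alpha>"
      using fin by (simp_all add: LA_def finite_lists_length_eq card_lists_length_eq)
    have finLB: "finite LB" "card LB = card \<Sigma> ^ \<beta>"
      using fin by (simp_all add: LB_def finite_lists_length_eq card_lists_length_eq)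
    have finU: "finite U" "card U = card \<Sigma> ^ (\<alpha>*(i0-b))"
      using finLA by (simp_all add: U_def finite_lists_length_eq card_lists_length_eq power_mult)
    have finF: "finite (F j)" "card (F j) = card \<Sigma> ^ (\<beta>*(d-(i0+j)))" for j
      using finLB by (simp_all add: F_def finite_lists_length_eq card_lists_length_eq power_mult)
    have finOM: "finite OMset" "card OMset = card \<Sigma> ^ (\<Sum>j<m. \<beta>*(d-(i0+j)))"
      using card_dep_lists[of F m, OF finF(1)] by (simp_all add: OMset_def finF(2) power_sum)
    have finT: "finite T" "card T = card \<Sigma> ^ C"
      using finU finOM by (simp_all add: T_def card_cartesian_product C_def power_add)
    have finN: "finite N" "card N = card \<Sigma> ^ B"
      using fin by (simp_all add: N_def finite_lists_length_eq card_lists_length_eq)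
    have Nne: "N \<noteq> {}" using \<sigma>0 by (auto simp: N_def intro!: exI[of _ "replicate B \<sigma>0"])
    have eq: "bind_pmf (run_dss S cp.A0 n cp.sched w) (\<lambda>st. map_pmf (\<lambda>est. est \<noteq> w)
                 (dec S cp.sched [0..<i0+m] (collected cp.A0 [0..<i0+m] st))) =
              bind_pmf (bind_pmf (Pw w) Q) (\<lambda>v. map_pmf (\<lambda>e. e \<noteq> w) (dec S cp.sched [0..<i0+m] v))" for w
      by (simp add: Dw[symmetric] bind_map_pmf)
    have "1 - real (card T) / real (card N) \<le> error_prob S cp.A0 n \<Sigma> B cp.sched [0..<i0+m]"
      unfolding error_prob_def N_def[symmetric] eq
      by (rule err_lower[OF finN(1) Nne finT(1) sup refl])
    with err have le: "1 - real (card T) / real (card N) \<le> 1/4" by linarith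
    have "card \<Sigma> ^ C * 2 \<le> card \<Sigma> ^ B"
    proof -
      have "B = C + (B - C)" using BC by simp
      then have "card \<Sigma> ^ B = card \<Sigma> ^ C * card \<Sigma> ^ (B - C)" by (metis power_add)
      moreover have "2 \<le> card \<Sigma> ^ (B - C)"
        using c2 BC by (meson le_trans self_le_power less_le_not_le not_less_eq_eq zero_less_diff order.strict_trans2 nat_le_linear one_le_numeral) 
      ultimately show ?thesis by simp
    qed
    then have "real (card T) * 2 \<le> real (card N)" unfolding finT(2) finN(2) by (metis of_nat_le_iff of_nat_mult of_nat_numeral)
    moreover have "card N > 0" using finN(1) Nne by (simp add: card_gt_0_iff)
    ultimately have "real (card T) / real (card N) \<le> 1/2" by (simp add: divide_le_eq)
    with le show False by linarith
  qed
  show ?thesis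
    unfolding resiliency_capacity_def sumC
    by (rule Sup_least) (auto dest: key)
qed

end
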